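(* Let $(a_d)_{d\in\mathbb N}$ be a real sequence and $(b_d)_{d\in\mathbb N}$ a positive sequence with $b_d\to\infty$. Let $q:(0,1)\to\mathbb R$ be non-increasing and let $G$ be a distribution function such that $q(\varepsilon)=G^{-1}(1-\varepsilon^2)$ for all $\varepsilon\in C(q)$. Then $$\ln n^{X_d}(\varepsilon)=a_d+q(\varepsilon)b_d+o(b_d),\quad d\to\infty,\quad\text{for all }\varepsilon\in C(q)$$ holds if and only if $G^{X_d}_{a_d,b_d}$ converges weakly to $G$, i.e. $\lim_{d\to\infty}G^{X_d}_{a_d,b_d}(x)=G(x)$ for all $x\in C(G)$, where $$G^{X_d}_{a_d,b_d}(x)=\sum_{k=1}^\infty\bar\lambda^{X_d}_k\,\mathbf 1\bigl(\bar\lambda^{X_d}_k\ge e^{-a_d-xb_d}\bigr),\quad x\in\mathbb R.$$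
   Context: For each $d\in\mathbb N$, $X_d$ is a random element of a separable Hilbert space $H_d$ with $\mathbb E X_d=0$ and $\mathbb E\|X_d\|_{H_d}^2<\infty$. For a centered Hilbert-space random element $Z$ with finite second moment, $\lambda^Z_1\ge\lambda^Z_2\ge\dots\ge 0$ denote the eigenvalues of its covariance operator listed with multiplicity (padded with zeros if there are finitely many), $\Lambda^Z=\sum_k\lambda^Z_k=\mathbb E\|Z\|^2$, and $\bar\lambda^Z_k=\lambda^Z_k/\Lambda^Z$. It is assumed that $\lambda^{X_d}_1>0$ for all $d$. The average case approximation complexity is $n^{X_d}(\varepsilon)=\min\{n\in\mathbb N: e^{X_d}(n)\le \varepsilon\, e^{X_d}(0)\}$ for $\varepsilon\in(0,1)$, where $e^{X_d}(0)=(\mathbb E\|X_d\|^2)^{1/2}$ and $e^{X_d}(n)$ is the infimum of $(\mathbb E\|X_d-\sum_{m=1}^n l_m(X_d)\psi_m\|^2)^{1/2}$ over all $\psi_m\in H_d$, $l_m\in H_d^*$; equivalently $n^{X_d}(\varepsilon)=\min\{n\in\mathbb N:\ \sum_{k>n}\bar\lambda^{X_d}_k\le\varepsilon^2\}$. A distribution function is a non-decreasing right-continuous $F:\mathbb R\to[0,1]$ with limits $0$ at $-\infty$ and $1$ at $+\infty$. For a function $f$, $C(f)$ denotes its set of continuity points and $f^{-1}(y)=\inf\{x\in\mathbb R: f(x)\ge y\}$ its generalized inverse. $\mathbf 1(A)$ is the indicator of $A$. *)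

theory Defs
  imports "HOL-Analysis.Analysis"
begin

text \<open>Eigenvalue sequence of the covariance operator of a centered random element
  with finite second moment: non-negative, non-increasing, summable (listed with
  multiplicity, padded with zeros). Index k = 0 corresponds to lambda_1.\<close>
definition eigen_seq :: "(nat \<Rightarrow> real) \<Rightarrow> bool" where
  "eigen_seq l \<longleftrightarrow> (\<forall>k. 0 \<le> l k) \<and> (\<forall>k. l (Suc k) \<le> l k) \<and> summable l"

definition total_var :: "(nat \<Rightarrow> real) \<Rightarrow> real" where
  "total_var l = (\<Sum>k. l k)"

definition norm_eig :: "(nat \<Rightarrow> real) \<Rightarrow> nat \<Rightarrow> real" where
  "norm_eig l k = l k / total_var l"

text \<open>Average case approximation complexity:
  min { n : sum_{k>n} bar-lambda_k <= eps^2 } (1-based), i.e. tail from 0-based index n.\<close>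
definition avg_complexity :: "(nat \<Rightarrow> real) \<Rightarrow> real \<Rightarrow> nat" where
  "avg_complexity l \<epsilon> = (LEAST n::nat. 1 \<le> n \<and> (\<Sum>j. norm_eig l (j + n)) \<le> \<epsilon>\<^sup>2)"

definition G_fun :: "(nat \<Rightarrow> real) \<Rightarrow> real \<Rightarrow> real \<Rightarrow> real \<Rightarrow> real" where
  "G_fun l a b x = (\<Sum>k. norm_eig l k *
      (if norm_eig l k \<ge> exp (- a - x * b) then 1 else 0))"

definition distribution_function :: "(real \<Rightarrow> real) \<Rightarrow> bool" where
  "distribution_function F \<longleftrightarrow> mono F \<and> (\<forall>x. 0 \<le> F x \<and> F x \<le> 1) \<and>
     (\<forall>x. continuous (at_right x) F) \<and> (F \<longlongrightarrow> 0) at_bot \<and> (F \<longlongrightarrow> 1) at_top"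

definition gen_inv :: "(real \<Rightarrow> real) \<Rightarrow> real \<Rightarrow> real" where
  "gen_inv f y = Inf {x. f x \<ge> y}"

end

theory Submission
  imports Defs
begin


definition gs :: "(nat \<Rightarrow> real) \<Rightarrow> real \<Rightarrow> real" where
  "gs l t = (\<Sum>k. norm_eig l k * (if norm_eig l k \<ge> t then 1 else 0))"

lemma G_fun_gs: "G_fun l a b x = gs l (exp (- a - x * b))"
  unfolding G_fun_def gs_def by simp

locale eseq =
  fixes l :: "nat \<Rightarrow> real"
  assumes eig: "eigen_seq l" and pos: "l 0 > 0"
begin

lemma l_nonneg: "0 \<le> l k" using eig unfolding eigen_seq_def by auto
lemma l_summ: "summable l" using eig unfolding eigen_seq_def by auto
lemma l_dec: "k \<le> j \<Longrightarrow> l j \<le> l k"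
proof -
  have "decseq l" using eig unfolding eigen_seq_def by (intro decseq_SucI) auto
  thus "k \<le> j \<Longrightarrow> l j \<le> l k" by (simp add: decseq_def)
qed

lemma tv_pos: "total_var l > 0"
proof -
  have "sum l {..<1} \<le> suminf l"
    by (rule sum_le_suminf[OF l_summ]) (auto simp: l_nonneg)
  thus ?thesis using pos unfolding total_var_def by simp
qed

abbreviation "L \<equiv> norm_eig l"

lemma L_nonneg: "0 \<le> L k" unfolding norm_eig_def using l_nonneg tv_pos by simp
lemma L_dec: "k \<le> j \<Longrightarrow> L j \<le> L k" unfolding norm_eig_def using l_dec tv_pos
  by (simp add: divide_right_mono)
lemma L_summ: "summable L" unfolding norm_eig_def[abs_def] using l_summ by (rule summable_divide)
lemma L_sum1: "suminf L = 1"
  unfolding norm_eig_def[abs_def] using l_summ tv_pos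
  by (simp add: suminf_divide total_var_def)

lemma L_partial_le: "sum L {..<n} \<le> 1"
  using sum_le_suminf[OF L_summ, of "{..<n}"] L_nonneg L_sum1 by auto

lemma tail_eq: "(\<Sum>j. L (j + n)) = 1 - sum L {..<n}"
  using suminf_split_initial_segment[OF L_summ, of n] L_sum1 by simp

lemma gs_summ: "summable (\<lambda>k. L k * (if L k \<ge> t then 1 else 0))"
  by (rule summable_comparison_test[OF _ L_summ]) (auto simp: L_nonneg)

lemma gs_bounds: "0 \<le> gs l t" "gs l t \<le> 1"
proof -
  show "0 \<le> gs l t" unfolding gs_def by (rule suminf_nonneg[OF gs_summ]) (auto simp: L_nonneg)
  have "gs l t \<le> suminf L" unfolding gs_def
    by (rule suminf_le[OF _ gs_summ L_summ]) (auto simp: L_nonneg)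
  thus "gs l t \<le> 1" using L_sum1 by simp
qed

lemma ac_props:
  assumes "0 < e" "e < 1"
  shows "1 \<le> avg_complexity l e" "(\<Sum>j. L (j + avg_complexity l e)) \<le> e\<^sup>2"
    "\<And>n. 1 \<le> n \<Longrightarrow> (\<Sum>j. L (j + n)) \<le> e\<^sup>2 \<Longrightarrow> avg_complexity l e \<le> n"
proof -
  obtain N where N: "\<forall>n\<ge>N. norm (\<Sum>i. L (i + n)) < e\<^sup>2"
    using suminf_exist_split[OF _ L_summ, of "e\<^sup>2"] assms by auto
  have ex: "1 \<le> max N 1 \<and> (\<Sum>j. L (j + max N 1)) \<le> e\<^sup>2"
    using N[rule_format, of "max N 1"] by auto
  show "1 \<le> avg_complexity l e" "(\<Sum>j. L (j + avg_complexity l e)) \<le> e\<^sup>2"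
    unfolding avg_complexity_def using LeastI[of "\<lambda>n. 1 \<le> n \<and> (\<Sum>j. L (j + n)) \<le> e\<^sup>2" "max N 1", OF ex] by auto
  show "\<And>n. 1 \<le> n \<Longrightarrow> (\<Sum>j. L (j + n)) \<le> e\<^sup>2 \<Longrightarrow> avg_complexity l e \<le> n"
    unfolding avg_complexity_def by (rule Least_le) auto
qed

lemma lemA:
  assumes "0 < e" "e < 1" "t > 0" "gs l t \<ge> 1 - e\<^sup>2"
  shows "real (avg_complexity l e) * t \<le> 1"
proof -
  define N where "N = avg_complexity l e"
  have N1: "1 \<le> N" using ac_props assms N_def by auto
  have "\<exists>k\<ge>N - 1. L k \<ge> t"
  proof (rule ccontr)
    assume "\<not> ?thesis"
    hence lt: "\<And>k. k \<ge> N - 1 \<Longrightarrow> L k < t" by force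
    have "gs l t = (\<Sum>k\<in>{..<N-1}. L k * (if L k \<ge> t then 1 else 0))"
      unfolding gs_def
    proof (rule suminf_finite)
      fix k assume "k \<notin> {..<N-1}"
      hence "L k < t" using lt by simp
      thus "L k * (if t \<le> L k then 1 else 0) = 0" by simp
    qed simp
    also have "\<dots> \<le> sum L {..<N-1}" by (rule sum_mono) (auto simp: L_nonneg)
    finally have g: "gs l t \<le> sum L {..<N-1}" .
    show False
    proof (cases "N - 1 = 0")
      case True
      then show ?thesis using g assms by (simp add: power_less_one_iff abs_less_iff)
        (smt (verit) assms(1) assms(2) mult_less_cancel_right2 power2_eq_square)
    next
      case False
      have "\<not> (\<Sum>j. L (j + (N-1))) \<le> e\<^sup>2"
      proof
        assume "(\<Sum>j. L (j + (N-1))) \<le> e\<^sup>2"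
        hence "N \<le> N - 1" using ac_props(3)[OF assms(1,2), of "N-1"] False N_def by auto
        thus False using N1 by auto
      qed
      thus False using g assms(4) tail_eq[of "N-1"] by linarith
    qed
  qed
  then obtain k where k: "k \<ge> N - 1" "L k \<ge> t" by auto
  have "\<And>i. i < N \<Longrightarrow> t \<le> L i"
  proof -
    fix i assume "i < N"
    hence "i \<le> k" using k(1) by linarith
    thus "t \<le> L i" using k(2) L_dec[of i k] by linarith
  qed
  hence "(\<Sum>i<N. t) \<le> sum L {..<N}" by (intro sum_mono) auto
  thus ?thesis using L_partial_le[of N] N_def by simp
qed

lemma lemB:
  assumes "0 < e1" "e1 < e" "e < 1" "gs l t < 1 - e\<^sup>2" "t > 0"
  shows "real (avg_complexity l e1) * t > e\<^sup>2 - e1\<^sup>2"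
proof -
  define N where "N = avg_complexity l e1"
  have tN: "(\<Sum>j. L (j + N)) \<le> e1\<^sup>2" using ac_props assms N_def by auto
  have "(\<Sum>k\<in>{..<N}. L k * (if L k \<ge> t then 1 else 0)) \<le> gs l t"
    unfolding gs_def by (rule sum_le_suminf[OF gs_summ]) (auto simp: L_nonneg)
  moreover have "(\<Sum>k\<in>{..<N}. L k - t) \<le> (\<Sum>k\<in>{..<N}. L k * (if L k \<ge> t then 1 else 0))"
    by (rule sum_mono) (use assms(5) in \<open>auto simp: L_nonneg\<close>)
  moreover have "(\<Sum>k\<in>{..<N}. L k - t) = sum L {..<N} - real N * t"
    by (simp add: sum_subtractf)
  ultimately have "real N * t > e\<^sup>2 - e1\<^sup>2" using tN tail_eq[of N] assms(4) by linarith
  thus ?thesis using N_def by simp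
qed

end


lemma lemA':
  assumes "eseq l" "b > 0" "0 < e" "e < 1" "G_fun l a b x \<ge> 1 - e\<^sup>2"
  shows "(ln (real (avg_complexity l e)) - a) / b \<le> x"
proof -
  interpret eseq l by fact
  define t where "t = exp (- a - x * b)"
  have t: "t > 0" unfolding t_def by simp
  have N: "real (avg_complexity l e) * t \<le> 1" "1 \<le> real (avg_complexity l e)"
    using lemA[OF assms(3,4) t] assms(5) ac_props[OF assms(3,4)] unfolding G_fun_gs t_def by auto
  have "ln (real (avg_complexity l e) * t) \<le> 0" using N t by simp
  hence "ln (real (avg_complexity l e)) + ln t \<le> 0" using N t by (simp add: ln_mult)
  hence "ln (real (avg_complexity l e)) - a \<le> x * b" unfolding t_def by simp
  thus ?thesis using assms(2) by (simp add: divide_le_eq)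
qed

lemma lemB':
  assumes "eseq l" "b > 0" "0 < e1" "e1 < e" "e < 1" "G_fun l a b x < 1 - e\<^sup>2"
  shows "(ln (real (avg_complexity l e1)) - a) / b > x + ln (e\<^sup>2 - e1\<^sup>2) / b"
proof -
  interpret eseq l by fact
  define t where "t = exp (- a - x * b)"
  have t: "t > 0" unfolding t_def by simp
  have c: "e\<^sup>2 - e1\<^sup>2 > 0" using assms by (simp add: power_strict_mono)
  have N: "real (avg_complexity l e1) * t > e\<^sup>2 - e1\<^sup>2" "1 \<le> real (avg_complexity l e1)"
    using lemB[OF assms(3,4,5) _ t] assms(6) ac_props[of e1] assms unfolding G_fun_gs t_def by auto
  have "ln (real (avg_complexity l e1) * t) > ln (e\<^sup>2 - e1\<^sup>2)" using N t c by simp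
  hence "ln (real (avg_complexity l e1)) + ln t > ln (e\<^sup>2 - e1\<^sup>2)" using N t by (simp add: ln_mult)
  hence "ln (real (avg_complexity l e1)) - a > x * b + ln (e\<^sup>2 - e1\<^sup>2)" unfolding t_def by simp
  thus ?thesis using assms(2) by (simp add: less_divide_eq add_divide_distrib distrib_right)
qed

lemma G_fun_bounds: "eseq l \<Longrightarrow> 0 \<le> G_fun l a b x \<and> G_fun l a b x \<le> 1"
  using eseq.gs_bounds unfolding G_fun_gs by blast

lemma dense_cont:
  fixes f :: "real \<Rightarrow> real"
  assumes "countable {a\<in>A. \<not> isCont f a}" "{u<..<v} \<subseteq> A" "u < v"
  shows "\<exists>x. u < x \<and> x < v \<and> isCont f x"
proof -
  obtain x where "x \<in> {u<..<v}" "x \<notin> {a\<in>A. \<not> isCont f a}"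
    using open_minus_countable[OF assms(1), of "{u<..<v}"] assms(3) by auto
  thus ?thesis using assms(2) by auto
qed

lemma gen_inv_facts:
  assumes G: "distribution_function G" and y: "0 < y" "y < 1"
  shows "gen_inv G y < x \<Longrightarrow> G x \<ge> y"
    and "G x \<ge> y \<Longrightarrow> gen_inv G y \<le> x"
    and "G z < y \<Longrightarrow> z \<le> gen_inv G y"
proof -
  have mono: "mono G" and t1: "(G \<longlongrightarrow> 1) at_top" and t0: "(G \<longlongrightarrow> 0) at_bot"
    using G unfolding distribution_function_def by auto
  have "eventually (\<lambda>x. G x > y) at_top" using order_tendstoD(1)[OF t1] y by auto
  then obtain z0 where "G z0 > y" by (auto simp: eventually_at_top_linorder)
  hence ne: "{x. G x \<ge> y} \<noteq> {}" by (metis empty_iff less_imp_le mem_Collect_eq)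
  have "eventually (\<lambda>x. G x < y) at_bot" using order_tendstoD(2)[OF t0] y by auto
  then obtain z1 where z1: "\<And>x. x \<le> z1 \<Longrightarrow> G x < y" by (auto simp: eventually_at_bot_linorder)
  have bdd: "bdd_below {x. G x \<ge> y}"
    by (rule bdd_belowI[of _ z1]) (metis mem_Collect_eq nle_le not_less z1)
  show "gen_inv G y < x \<Longrightarrow> G x \<ge> y"
  proof -
    assume "gen_inv G y < x"
    then obtain w where "G w \<ge> y" "w < x" using cInf_lessD[OF ne] unfolding gen_inv_def by auto
    thus "G x \<ge> y" using mono by (meson less_imp_le monoD order_trans)
  qed
  show "G x \<ge> y \<Longrightarrow> gen_inv G y \<le> x" unfolding gen_inv_def by (rule cInf_lower[OF _ bdd]) simp
  show "G z < y \<Longrightarrow> z \<le> gen_inv G y" unfolding gen_inv_def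
  proof (rule cInf_greatest[OF ne])
    fix w assume "G z < y" "w \<in> {x. y \<le> G x}"
    thus "z \<le> w" using mono by (metis mem_Collect_eq monoD not_le less_le_trans order.strict_implies_order)
  qed
qed



lemma isCont_eps:
  fixes f :: "real \<Rightarrow> real"
  assumes "isCont f x" "r > 0"
  shows "\<exists>\<delta>>0. \<forall>y. \<bar>y - x\<bar> < \<delta> \<longrightarrow> \<bar>f y - f x\<bar> < r"
proof -
  from assms(1) have "f \<midarrow>x\<rightarrow> f x" by (simp add: isCont_def)
  then obtain s where "s > 0" "\<forall>y. y \<noteq> x \<and> norm (y - x) < s \<longrightarrow> norm (f y - f x) < r"
    using assms(2) unfolding LIM_eq by blast
  thus ?thesis using assms(2) by (metis diff_self abs_zero real_norm_def)
qed

lemma sqrt_lt_sq: "sqrt (z::real) < w \<Longrightarrow> 0 \<le> w \<Longrightarrow> z < w\<^sup>2"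
  by (metis abs_of_nonneg real_sqrt_abs real_sqrt_less_iff)
lemma lt_sqrt_sq: "(w::real) < sqrt z \<Longrightarrow> 0 \<le> w \<Longrightarrow> w\<^sup>2 < z"
  by (metis abs_of_nonneg real_sqrt_abs real_sqrt_less_iff)



theorem theorem1:
  fixes lam :: "nat \<Rightarrow> nat \<Rightarrow> real"
    and a b :: "nat \<Rightarrow> real"
    and q G :: "real \<Rightarrow> real"
  assumes eig: "\<And>d. eigen_seq (lam d)"
    and pos1: "\<And>d. lam d 0 > 0"
    and bpos: "\<And>d. b d > 0"
    and binf: "filterlim b at_top sequentially"
    and qmono: "antimono_on {0<..<1} q"
    and Gdf: "distribution_function G"
    and qG: "\<And>\<epsilon>. \<epsilon> \<in> {0<..<1} \<Longrightarrow> isCont q \<epsilon> \<Longrightarrow> q \<epsilon> = gen_inv G (1 - \<epsilon>\<^sup>2)"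
  shows "(\<forall>\<epsilon>\<in>{0<..<1}. isCont q \<epsilon> \<longrightarrow>
            ((\<lambda>d. (ln (real (avg_complexity (lam d) \<epsilon>)) - a d - q \<epsilon> * b d) / b d)
               \<longlongrightarrow> 0) sequentially)
       \<longleftrightarrow> (\<forall>x. isCont G x \<longrightarrow> ((\<lambda>d. G_fun (lam d) (a d) (b d) x) \<longlongrightarrow> G x) sequentially)"
proof -
  have E: "\<And>d. eseq (lam d)" using eig pos1 by unfold_locales
  define Lf where "Lf d e = (ln (real (avg_complexity (lam d) e)) - a d) / b d" for d e
  have expr: "(\<lambda>d. (ln (real (avg_complexity (lam d) e)) - a d - q e * b d) / b d) = (\<lambda>d. Lf d e - q e)" for e
    unfolding Lf_def
  proof (intro ext)
    fix d have "b d \<noteq> 0" using bpos[of d] by simp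
    thus "(ln (real (avg_complexity (lam d) e)) - a d - q e * b d) / b d =
       (ln (real (avg_complexity (lam d) e)) - a d) / b d - q e" by (simp add: diff_divide_distrib)
  qed
  have equiv: "((\<lambda>d. (ln (real (avg_complexity (lam d) e)) - a d - q e * b d) / b d) \<longlongrightarrow> 0) sequentially
      \<longleftrightarrow> ((\<lambda>d. Lf d e) \<longlongrightarrow> q e) sequentially" for e
    unfolding expr by (rule LIM_zero_iff)
  have A: "Lf d e \<le> x" if "0 < e" "e < 1" "G_fun (lam d) (a d) (b d) x \<ge> 1 - e\<^sup>2" for d e x
    unfolding Lf_def by (rule lemA'[OF E bpos that])
  have B: "Lf d e1 > x + ln (e\<^sup>2 - e1\<^sup>2) / b d"
    if "0 < e1" "e1 < e" "e < 1" "G_fun (lam d) (a d) (b d) x < 1 - e\<^sup>2" for d e e1 x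
    unfolding Lf_def by (rule lemB'[OF E bpos that])
  have Gb: "0 \<le> G_fun (lam d) (a d) (b d) x" "G_fun (lam d) (a d) (b d) x \<le> 1" for d x
    using G_fun_bounds[OF E] by auto
  have lnlim: "((\<lambda>d. c / b d) \<longlongrightarrow> 0) sequentially" for c
    by (rule tendsto_divide_0[OF tendsto_const filterlim_at_top_imp_at_infinity[OF binf]])
  have Gmono: "mono G" and G01: "\<And>x. 0 \<le> G x \<and> G x \<le> 1"
    using Gdf unfolding distribution_function_def by auto
  have cq: "countable {a\<in>{0<..<1}. \<not> isCont q a}"
  proof -
    have "mono_on {0<..<1} (\<lambda>x. - q x)" using qmono
      unfolding monotone_on_def by auto
    hence c: "countable {a\<in>{0<..<1}. \<not> isCont (\<lambda>x. - q x) a}"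
      by (intro mono_on_ctble_discont_open) auto
    have "isCont (\<lambda>x. - q x) a \<longleftrightarrow> isCont q a" for a
    proof
      assume "isCont (\<lambda>x. - q x) a"
      from continuous_minus[OF this] show "isCont q a" by simp
    qed (intro continuous_intros)
    thus ?thesis using c by simp
  qed
  have densq: "\<exists>e. u < e \<and> e < v \<and> isCont q e" if "0 \<le> u" "u < v" "v \<le> 1" for u v
    by (rule dense_cont[OF cq]) (use that in auto)
  have densG: "\<exists>x. u < x \<and> x < v \<and> isCont G x" if "u < v" for u v
    by (rule dense_cont[of UNIV]) (use mono_ctble_discont[OF Gmono] that in auto)
  show ?thesis
  proof
    assume H: "\<forall>\<epsilon>\<in>{0<..<1}. isCont q \<epsilon> \<longrightarrow>
            ((\<lambda>d. (ln (real (avg_complexity (lam d) \<epsilon>)) - a d - q \<epsilon> * b d) / b d) \<longlongrightarrow> 0) sequentially"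
    have HL: "((\<lambda>d. Lf d e) \<longlongrightarrow> q e) sequentially" if "0 < e" "e < 1" "isCont q e" for e
      using H that equiv by auto
    show "\<forall>x. isCont G x \<longrightarrow> ((\<lambda>d. G_fun (lam d) (a d) (b d) x) \<longlongrightarrow> G x) sequentially"
    proof (intro allI impI order_tendstoI)
      fix x c assume cx: "isCont G x" and c: "c < G x"
      show "\<forall>\<^sub>F d in sequentially. c < G_fun (lam d) (a d) (b d) x"
      proof (cases "c < 0")
        case True
        have "c < G_fun (lam d) (a d) (b d) x" for d using Gb(1)[of d x] True by linarith
        thus ?thesis by simp
      next
        case False
        have "sqrt (max 0 (1 - G x)) < sqrt (1 - c)" using c False G01[of x] by simp
        then obtain e1 where e1: "sqrt (max 0 (1 - G x)) < e1" "e1 < sqrt (1 - c)" "isCont q e1"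
          using densq[of "sqrt (max 0 (1 - G x))" "sqrt (1 - c)"] False by auto
        have e1p: "0 < e1" using e1(1) by (meson le_less_trans max.cobounded1 real_sqrt_ge_zero)
        have sq1: "sqrt (1 - c) \<le> 1" using False by simp
        obtain e where e: "e1 < e" "e < sqrt (1 - c)" "isCont q e"
          using densq[of e1 "sqrt (1 - c)"] e1p e1(2) sq1 by auto
        have e1s: "1 - G x < e1\<^sup>2" using sqrt_lt_sq[OF e1(1)] e1p by simp
        have es: "e\<^sup>2 < 1 - c" using lt_sqrt_sq[OF e(2)] e1p e(1) by simp
        have sqle: "sqrt (1 - c) \<le> 1" using False by simp
        have e1l: "e1 < 1" "e < 1" using e(1,2) sq1 by linarith+
        obtain \<delta> where \<delta>: "\<delta> > 0" "\<forall>y. \<bar>y - x\<bar> < \<delta> \<longrightarrow> \<bar>G y - G x\<bar> < G x - (1 - e1\<^sup>2)"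
          using isCont_eps[OF cx, of "G x - (1 - e1\<^sup>2)"] e1s by auto
        define x' where "x' = x - \<delta>/2"
        have x'x: "x' < x" using \<delta> x'_def by simp
        have Gx': "G x' \<ge> 1 - e1\<^sup>2" using \<delta>(2)[rule_format, of x'] \<delta>(1) x'_def by auto
        have y1: "0 < 1 - e1\<^sup>2" "1 - e1\<^sup>2 < 1" using e1p e1l by (auto simp: power_less_one_iff)
        have qe1: "q e1 \<le> x'" using qG[of e1] e1p e1l e1(3) gen_inv_facts(2)[OF Gdf y1 Gx'] by simp
        define h where "h = (x - x') / 2"
        have h: "h > 0" "x' + h = x - h" using x'x unfolding h_def by (simp_all add: field_simps)
        have ev1: "\<forall>\<^sub>F d in sequentially. Lf d e1 < x' + h"
          by (rule order_tendstoD(2)[OF HL[OF e1p e1l(1) e1(3)]]) (use qe1 h in linarith)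
        have ev2: "\<forall>\<^sub>F d in sequentially. ln (e\<^sup>2 - e1\<^sup>2) / b d > - h"
          by (rule order_tendstoD(1)[OF lnlim[of "ln (e\<^sup>2 - e1\<^sup>2)"]]) (use h in linarith)
        show ?thesis using ev1 ev2
        proof eventually_elim
          case (elim d)
          have "\<not> G_fun (lam d) (a d) (b d) x < 1 - e\<^sup>2"
          proof
            assume gl: "G_fun (lam d) (a d) (b d) x < 1 - e\<^sup>2"
            have f1: "x + ln (e\<^sup>2 - e1\<^sup>2) / b d < Lf d e1" by (rule B[OF e1p e(1) e1l(2) gl])
            from f1 elim h show False by linarith
          qed
          thus ?case using es by linarith
        qed
      qed
    next
      fix x c assume cx: "isCont G x" and c: "G x < c"
      show "\<forall>\<^sub>F d in sequentially. G_fun (lam d) (a d) (b d) x < c"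
      proof (cases "c > 1")
        case True
        have "G_fun (lam d) (a d) (b d) x < c" for d using Gb(2)[of d x] True by linarith
        thus ?thesis by simp
      next
        case False
        have "sqrt (1 - c) < sqrt (1 - G x)" using c by simp
        then obtain e where e: "sqrt (1 - c) < e" "e < sqrt (1 - G x)" "isCont q e"
          using densq[of "sqrt (1 - c)" "sqrt (1 - G x)"] False G01[of x] by auto
        have ep: "0 < e" using e(1) False by (meson le_less_trans not_less real_sqrt_ge_zero diff_ge_0_iff_ge)
        have e1: "e < 1" using e(2) G01[of x] by (smt (verit) real_sqrt_le_1_iff)
        have es1: "1 - c < e\<^sup>2" using sqrt_lt_sq[OF e(1)] ep by simp
        have es2: "e\<^sup>2 < 1 - G x" using lt_sqrt_sq[OF e(2)] ep by simp
        obtain \<delta> where \<delta>: "\<delta> > 0" "\<forall>y. \<bar>y - x\<bar> < \<delta> \<longrightarrow> \<bar>G y - G x\<bar> < (1 - e\<^sup>2) - G x"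
          using isCont_eps[OF cx, of "(1 - e\<^sup>2) - G x"] es2 by auto
        define x'' where "x'' = x + \<delta>/2"
        have xx: "x < x''" using \<delta> x''_def by simp
        have Gx'': "G x'' < 1 - e\<^sup>2" using \<delta>(2)[rule_format, of x''] \<delta>(1) x''_def by auto
        have y1: "0 < 1 - e\<^sup>2" "1 - e\<^sup>2 < 1" using ep e1 by (auto simp: power_less_one_iff)
        have qe: "x'' \<le> q e" using qG[of e] ep e1 e(3) gen_inv_facts(3)[OF Gdf y1 Gx''] by simp
        have ev1: "\<forall>\<^sub>F d in sequentially. Lf d e > x"
          by (rule order_tendstoD(1)[OF HL[OF ep e1 e(3)]]) (use qe xx in \<open>simp add: field_simps\<close>)
        show ?thesis using ev1
        proof eventually_elim
          case (elim d)
          have "\<not> G_fun (lam d) (a d) (b d) x \<ge> 1 - e\<^sup>2"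
          proof
            assume "G_fun (lam d) (a d) (b d) x \<ge> 1 - e\<^sup>2"
            from A[OF ep e1 this] elim show False by linarith
          qed
          thus ?case using es1 by linarith
        qed
      qed
    qed
  next
    assume H: "\<forall>x. isCont G x \<longrightarrow> ((\<lambda>d. G_fun (lam d) (a d) (b d) x) \<longlongrightarrow> G x) sequentially"
    show "\<forall>\<epsilon>\<in>{0<..<1}. isCont q \<epsilon> \<longrightarrow>
            ((\<lambda>d. (ln (real (avg_complexity (lam d) \<epsilon>)) - a d - q \<epsilon> * b d) / b d) \<longlongrightarrow> 0) sequentially"
    proof (intro ballI impI)
      fix e :: real assume e01: "e \<in> {0<..<1}" and ce: "isCont q e"
      have ep: "0 < e" and e1: "e < 1" using e01 by auto
      have "((\<lambda>d. Lf d e) \<longlongrightarrow> q e) sequentially"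
      proof (rule order_tendstoI)
        fix c assume c: "q e < c"
        obtain \<delta> where \<delta>: "\<delta> > 0" "\<forall>y. \<bar>y - e\<bar> < \<delta> \<longrightarrow> \<bar>q y - q e\<bar> < c - q e"
          using isCont_eps[OF ce, of "c - q e"] c by auto
        obtain e' where e': "max 0 (e - \<delta>) < e'" "e' < e" "isCont q e'"
          using densq[of "max 0 (e - \<delta>)" e] ep e1 \<delta>(1) by auto
        have e'p: "0 < e'" "e' < 1" using e' e1 by auto
        have qe': "q e' < c" using \<delta>(2)[rule_format, of e'] e' by auto
        obtain x where x: "q e' < x" "x < c" "isCont G x" using densG[OF qe'] by auto
        have y1: "0 < 1 - e'\<^sup>2" "1 - e'\<^sup>2 < 1" using e'p by (auto simp: power_less_one_iff)
        have Gx: "G x \<ge> 1 - e'\<^sup>2" using gen_inv_facts(1)[OF Gdf y1] qG[of e'] e'p e'(3) x(1) by simp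
        have "e'\<^sup>2 < e\<^sup>2" using e' e'p by (simp add: power_strict_mono)
        hence "1 - e\<^sup>2 < G x" using Gx by simp
        from order_tendstoD(1)[OF H[rule_format, OF x(3)] this]
        show "\<forall>\<^sub>F d in sequentially. Lf d e < c"
        proof eventually_elim
          case (elim d)
          thus ?case using A[OF ep e1 less_imp_le[OF elim]] x(2) by simp
        qed
      next
        fix c assume c: "c < q e"
        obtain \<delta> where \<delta>: "\<delta> > 0" "\<forall>y. \<bar>y - e\<bar> < \<delta> \<longrightarrow> \<bar>q y - q e\<bar> < q e - c"
          using isCont_eps[OF ce, of "q e - c"] c by auto
        obtain e' where e': "e < e'" "e' < min 1 (e + \<delta>)" "isCont q e'"
          using densq[of e "min 1 (e + \<delta>)"] ep e1 \<delta>(1) by auto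
        have e'p: "0 < e'" "e' < 1" using e' ep by auto
        have qe': "c < q e'" using \<delta>(2)[rule_format, of e'] e' by auto
        obtain x where x: "c < x" "x < q e'" "isCont G x" using densG[OF qe'] by auto
        have y1: "0 < 1 - e'\<^sup>2" "1 - e'\<^sup>2 < 1" using e'p by (auto simp: power_less_one_iff)
        have Gx: "G x < 1 - e'\<^sup>2"
        proof (rule ccontr)
          assume "\<not> G x < 1 - e'\<^sup>2"
          hence "gen_inv G (1 - e'\<^sup>2) \<le> x" using gen_inv_facts(2)[OF Gdf y1] by simp
          thus False using qG[of e'] e'p e'(3) x(2) by simp
        qed
        have ev1: "\<forall>\<^sub>F d in sequentially. G_fun (lam d) (a d) (b d) x < 1 - e'\<^sup>2"
          using order_tendstoD(2)[OF H[rule_format, OF x(3)] Gx] .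
        have ev2: "\<forall>\<^sub>F d in sequentially. ln (e'\<^sup>2 - e\<^sup>2) / b d > c - x"
          by (rule order_tendstoD(1)[OF lnlim[of "ln (e'\<^sup>2 - e\<^sup>2)"]]) (use x(1) in \<open>simp add: field_simps\<close>)
        show "\<forall>\<^sub>F d in sequentially. c < Lf d e" using ev1 ev2
        proof eventually_elim
          case (elim d)
          thus ?case using B[OF ep e'(1) e'p(2) elim(1)] by linarith
        qed
      qed
      thus "((\<lambda>d. (ln (real (avg_complexity (lam d) e)) - a d - q e * b d) / b d) \<longlongrightarrow> 0) sequentially"
        using equiv by simp
    qed
  qed
qed


end
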